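(* For every real $\alpha$ with $0<\alpha<1/2$ there exists a constant $C_\alpha$ such that for every positive integer $N$, \[ \max_{|a_1|^2+\cdots+|a_N|^2=1}\ \sum_{m,n\le N}\frac{a_m\overline{a_n}\,(m,n)^{2\alpha}}{(mn)^{\alpha}} \le C_\alpha N^{1-2\alpha}, \] where the maximum is over complex vectors $(a_1,\dots,a_N)$ of Euclidean norm $1$ and the sum runs over positive integers $m,n\le N$.
   Context: $(m,n)$ denotes the greatest common divisor of the positive integers $m$ and $n$. *)

theory Defs
  imports "HOL-Analysis.Analysis"
begin

end

theory Submission
  imports Defs "HOL-Computational_Algebra.Primes"
begin



lemma card_div_mult:
  fixes p r k :: nat
  assumes p: "prime p" and r: "r > 0"
  shows "card {d. d dvd p^k*r} \<le> (k+1) * card {d. d dvd r}"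
proof -
  have "{d. d dvd p^k*r} \<subseteq> (\<lambda>(i,e). p^i*e) ` ({..k} \<times> {e. e dvd r})"
  proof
    fix d assume "d \<in> {d. d dvd p^k*r}"
    then obtain x y where "d = x*y" "x dvd p^k" "y dvd r" by (auto elim: dvd_productE)
    moreover from \<open>x dvd p^k\<close> obtain i where "i \<le> k" "x = p^i" using divides_primepow_nat[OF p] by auto
    ultimately show "d \<in> (\<lambda>(i,e). p^i*e) ` ({..k} \<times> {e. e dvd r})" by force
  qed
  moreover have "finite ({..k} \<times> {e. e dvd r})" using r by (simp add: finite_divisors_nat)
  ultimately have "card {d. d dvd p^k*r} \<le> card ({..k} \<times> {e. e dvd r})"
    by (meson card_image_le card_mono finite_imageI order_trans)
  also have "\<dots> = (k+1) * card {e. e dvd r}" by (simp add: card_cartesian_product)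
  finally show ?thesis .
qed

lemma small_ineq:
  fixes \<epsilon> :: real and k :: nat
  assumes "\<epsilon> > 0"
  shows "real (k+1) \<le> (1 + 1/(\<epsilon>*ln 2)) * 2 powr (k*\<epsilon>)"
proof -
  define L where "L = \<epsilon>*ln 2"
  have L: "L > 0" using assms by (simp add: L_def)
  have "2 powr (k*\<epsilon>) = exp (k*L)" by (simp add: powr_def L_def mult_ac)
  also have "\<dots> \<ge> 1 + k*L" by (rule exp_ge_add_one_self)
  finally have e: "2 powr (k*\<epsilon>) \<ge> 1 + k*L" .
  have "(1 + 1/L) * (1 + k*L) = 1 + k*L + 1/L + k" using L by (simp add: field_simps)
  also have "\<dots> \<ge> real (k+1)" using L by simp
  finally have "real (k+1) \<le> (1 + 1/L) * (1 + k*L)" .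
  also have "\<dots> \<le> (1 + 1/L) * 2 powr (k*\<epsilon>)"
    using e L by (intro mult_left_mono) (auto simp: field_simps)
  finally show ?thesis by (simp add: L_def)
qed

lemma powr_nat_pow: "real p > 0 \<Longrightarrow> real (p^k) powr (\<epsilon>::real) = (real p powr \<epsilon>) ^ k"
proof -
  assume p0: "real p > 0"
  have "real (p^k) = real p powr real k" using p0 by (simp add: powr_realpow)
  hence "real (p^k) powr \<epsilon> = real p powr (real k * \<epsilon>)" by (simp add: powr_powr)
  also have "\<dots> = (real p powr \<epsilon>) ^ k" using p0 by (simp add: powr_power)
  finally show ?thesis .
qed

lemma tau_bound_aux:
  fixes \<epsilon> :: real
  assumes e: "\<epsilon> > 0"
  defines "A \<equiv> 1 + 1/(\<epsilon>*ln 2)"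
  shows "m > 0 \<Longrightarrow> real (card {d. d dvd m}) \<le>
      A ^ card {q. prime q \<and> q dvd m \<and> real q powr \<epsilon> < 2} * real m powr \<epsilon>"
proof (induction m rule: less_induct)
  case (less m)
  have A1: "A \<ge> 1" using e by (simp add: A_def)
  show ?case
  proof (cases "m = 1")
    case True
    then show ?thesis using A1 by simp
  next
    case False
    with less.prems have "m \<noteq> 1" "m > 0" by auto
    then obtain p where p: "prime p" "p dvd m" using prime_factor_nat by blast
    define k where "k = multiplicity p m"
    obtain r where r: "m = p^k * r" "\<not> p dvd r" unfolding k_def
    proof -
      have m0: "m \<noteq> 0" using \<open>m > 0\<close> by simp
      have pu: "\<not> is_unit p" using p(1) by (metis not_prime_unit)
      show ?thesis by (rule multiplicity_decompose'[OF m0 pu]) (rule that; simp add: k_def)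
    qed
    have r0: "r > 0" using r(1) \<open>m > 0\<close> by (metis gr0I mult_0_right)
    have k1: "k \<ge> 1" using p \<open>m > 0\<close> unfolding k_def
      by (simp add: Suc_le_eq prime_multiplicity_gt_zero_iff)
    have p1: "p > 1" using p prime_gt_1_nat by blast
    have "p^k > 1" using p1 k1 by (intro one_less_power) auto
    hence rm: "r < m" using r(1) r0 by (metis mult_less_cancel2 mult_1)
    note IH = less.IH[OF rm r0]
    define S where "S x = {q. prime q \<and> q dvd x \<and> real q powr \<epsilon> < 2}" for x
    have finS: "finite (S r)"
      by (rule finite_subset[of _ "{d. d dvd r}"]) (use r0 in \<open>auto simp: S_def finite_divisors_nat\<close>)
    have Seq: "S m = (if real p powr \<epsilon> < 2 then insert p (S r) else S r)"
    proof -
      have "q dvd m \<longleftrightarrow> q = p \<or> q dvd r" if "prime q" for q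
        using that p k1 r(1) by (auto simp: prime_dvd_mult_iff prime_dvd_power_iff primes_dvd_imp_eq)
      thus ?thesis unfolding S_def using p by auto
    qed
    have pS: "p \<notin> S r" using r(2) by (simp add: S_def)
    have cm: "real (card {d. d dvd m}) \<le> real (k+1) * real (card {d. d dvd r})"
    proof -
      have "card {d. d dvd m} \<le> (k+1) * card {d. d dvd r}"
        by (subst r(1)) (rule card_div_mult[OF p(1) r0])
      thus ?thesis by (metis of_nat_le_iff of_nat_mult)
    qed
    have pk: "real (p^k) powr \<epsilon> = (real p powr \<epsilon>) ^ k"
      using p1 by (intro powr_nat_pow) simp
    have mm: "real m powr \<epsilon> = real (p^k) powr \<epsilon> * real r powr \<epsilon>"
      using r(1) by (simp add: powr_mult)
    show ?thesis
    proof (cases "real p powr \<epsilon> < 2")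
      case True
      have "2 powr (k*\<epsilon>) \<le> real (p^k) powr \<epsilon>"
      proof -
        have "2 powr (k*\<epsilon>) = (2 powr \<epsilon>) ^ k" by (simp add: powr_power)
        also have "\<dots> \<le> (real p powr \<epsilon>) ^ k"
          using p1 e by (intro power_mono powr_mono2) auto
        finally show ?thesis using pk by simp
      qed
      hence kk: "real (k+1) \<le> A * real (p^k) powr \<epsilon>"
        using small_ineq[OF e, of k] A1 unfolding A_def
        by (smt (verit, best) mult_left_mono)
      have "real (k+1) * real (card {d. d dvd r}) \<le> (A * real (p^k) powr \<epsilon>) * (A ^ card (S r) * real r powr \<epsilon>)"
        unfolding S_def by (rule mult_mono[OF kk IH]) (use A1 in auto)
      hence "real (card {d. d dvd m}) \<le> (A * real (p^k) powr \<epsilon>) * (A ^ card (S r) * real r powr \<epsilon>)"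
        using cm by linarith
      also have "\<dots> = A ^ card (S m) * real m powr \<epsilon>"
        using Seq True pS finS mm by simp
      finally show ?thesis unfolding S_def .
    next
      case False
      have "k+1 \<le> (2::nat) ^ k" using less_exp[of k] by (simp add: Suc_le_eq)
      hence "real (k+1) \<le> 2 ^ k" by (metis of_nat_le_iff of_nat_numeral of_nat_power)
      also have "\<dots> \<le> (real p powr \<epsilon>) ^ k" using False by (intro power_mono) auto
      finally have kk: "real (k+1) \<le> real (p^k) powr \<epsilon>" using pk by simp
      have "real (k+1) * real (card {d. d dvd r}) \<le> real (p^k) powr \<epsilon> * (A ^ card (S r) * real r powr \<epsilon>)"
        unfolding S_def by (rule mult_mono[OF kk IH]) (use A1 in auto)
      hence "real (card {d. d dvd m}) \<le> real (p^k) powr \<epsilon> * (A ^ card (S r) * real r powr \<epsilon>)"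
        using cm by linarith
      also have "\<dots> = A ^ card (S m) * real m powr \<epsilon>"
        using Seq False mm by simp
      finally show ?thesis unfolding S_def .
    qed
  qed
qed

lemma tau_bound:
  fixes \<epsilon> :: real
  assumes e: "\<epsilon> > 0"
  shows "\<exists>C>0. \<forall>m>0. real (card {d. d dvd m}) \<le> C * real m powr \<epsilon>"
proof -
  define A where "A = 1 + 1/(\<epsilon>*ln 2)"
  have A1: "A \<ge> 1" using e by (simp add: A_def)
  define P where "P = nat \<lceil>2 powr (1/\<epsilon>)\<rceil>"
  have sub: "{q. prime q \<and> q dvd m \<and> real q powr \<epsilon> < 2} \<subseteq> {..P}" for m
  proof
    fix q assume "q \<in> {q. prime q \<and> q dvd m \<and> real q powr \<epsilon> < 2}"
    hence q: "real q powr \<epsilon> < 2" "q > 0" using prime_gt_0_nat by auto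
    have "real q = (real q powr \<epsilon>) powr (1/\<epsilon>)" using e q by (simp add: powr_powr)
    also have "\<dots> \<le> 2 powr (1/\<epsilon>)" using q e by (intro powr_mono2) auto
    finally show "q \<in> {..P}" unfolding P_def by (simp add: le_nat_iff) linarith
  qed
  show ?thesis
  proof (intro exI[of _ "A^(P+1)"] conjI allI impI)
    show "A^(P+1) > 0" using A1 by simp
    fix m :: nat assume m: "m > 0"
    have "card {q. prime q \<and> q dvd m \<and> real q powr \<epsilon> < 2} \<le> P + 1"
      using card_mono[OF _ sub[of m]] by simp
    hence "A ^ card {q. prime q \<and> q dvd m \<and> real q powr \<epsilon> < 2} \<le> A^(P+1)"
      using A1 by (intro power_increasing) auto
    thus "real (card {d. d dvd m}) \<le> A^(P+1) * real m powr \<epsilon>"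
      using tau_bound_aux[OF e m] unfolding A_def[symmetric]
      by (smt (verit, best) mult_right_mono powr_ge_zero)
  qed
qed



lemma powr_step:
  fixes s M :: real
  assumes s: "s > 0" and M: "M \<ge> 1"
  shows "\<exists>z. (M+1) powr (1-s) - M powr (1-s) = (1-s) * z powr (-s) \<and> z powr (-s) \<ge> (M+1) powr (-s)"
proof -
  have "\<exists>z. M < z \<and> z < M+1 \<and> (M+1) powr (1-s) - M powr (1-s) = ((M+1) - M) * ((1-s) * z powr (1-s-1))"
  proof (rule MVT2)
    fix x assume "M \<le> x" "x \<le> M+1"
    then show "((\<lambda>x. x powr (1-s)) has_real_derivative ((1-s) * x powr (1-s-1))) (at x)"
      using has_real_derivative_powr[of x "1-s"] M by simp
  qed simp
  then obtain z where z: "M < z" "z < M+1" "(M+1) powr (1-s) - M powr (1-s) = (1-s) * z powr (-s)"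
    by auto
  moreover have "z powr (-s) \<ge> (M+1) powr (-s)"
    using z M s by (intro powr_mono2') auto
  ultimately show ?thesis by blast
qed

lemma sum_powr_small:
  fixes s :: real
  assumes s: "0 < s" "s < 1"
  shows "(\<Sum>k=1..M. real k powr (-s)) \<le> real M powr (1-s) / (1-s)"
proof (induction M)
  case 0
  then show ?case by simp
next
  case (Suc M)
  have step: "real (Suc M) powr (-s) \<le> (real (Suc M) powr (1-s) - real M powr (1-s)) / (1-s)"
  proof (cases "M = 0")
    case True
    then show ?thesis using s by (simp add: field_simps)
  next
    case False
    then have M1: "real M \<ge> 1" by simp
    obtain z where z: "(real M+1) powr (1-s) - real M powr (1-s) = (1-s) * z powr (-s)"
      "z powr (-s) \<ge> (real M+1) powr (-s)"
      using powr_step[OF s(1) M1] by blast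
    have "(1-s) * (real M+1) powr (-s) \<le> (1-s) * z powr (-s)"
      using z(2) s by (intro mult_left_mono) auto
    hence "(1-s) * real (Suc M) powr (-s) \<le> real (Suc M) powr (1-s) - real M powr (1-s)"
      using z(1) by (simp add: add.commute)
    thus ?thesis using s by (simp add: pos_le_divide_eq mult.commute)
  qed
  show ?case using Suc.IH step by (simp add: add_divide_distrib diff_divide_distrib)
qed

lemma sum_powr_big:
  fixes s :: real
  assumes s: "s > 1"
  shows "(\<Sum>k=1..M. real k powr (-s)) \<le> s / (s-1)"
proof -
  have "M \<ge> 1 \<Longrightarrow> (\<Sum>k=1..M. real k powr (-s)) \<le> 1 + (1 - real M powr (1-s)) / (s-1)"
  proof (induction M rule: dec_induct)
    case base
    then show ?case by simp
  next
    case (step M)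
    have M1: "real M \<ge> 1" using step.hyps by simp
    obtain z where z: "(real M+1) powr (1-s) - real M powr (1-s) = (1-s) * z powr (-s)"
      "z powr (-s) \<ge> (real M+1) powr (-s)"
      using powr_step[of s "real M"] M1 s by auto
    have "(s-1) * (real M+1) powr (-s) \<le> (s-1) * z powr (-s)"
      using z(2) s by (intro mult_left_mono) auto
    hence "(s-1) * real (Suc M) powr (-s) \<le> real M powr (1-s) - real (Suc M) powr (1-s)"
      using z(1) by (simp add: add.commute algebra_simps)
    hence "real (Suc M) powr (-s) \<le> (real M powr (1-s) - real (Suc M) powr (1-s)) / (s-1)"
      using s by (simp add: pos_le_divide_eq mult.commute)
    then show ?case using step.IH by (simp add: add_divide_distrib diff_divide_distrib)
  qed
  moreover have "1 + (1 - real M powr (1-s)) / (s-1) \<le> s / (s-1)"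
  proof -
    have "1 + (1 - real M powr (1-s)) / (s-1) = (s - real M powr (1-s)) / (s-1)"
      using s by (simp add: field_simps)
    also have "\<dots> \<le> s / (s-1)" using s by (intro divide_right_mono) auto
    finally show ?thesis .
  qed
  ultimately show ?thesis by (cases "M = 0") (use s in \<open>auto intro: order_trans\<close>)
qed



lemma quad_expand:
  fixes u :: "'a \<Rightarrow> real" and w :: "'b \<Rightarrow> 'a \<Rightarrow> real"
  shows "(\<Sum>m\<in>I. \<Sum>n\<in>I. u m * u n * (\<Sum>d\<in>J. if P d m \<and> P d n then w d m * w d n else 0))
       = (\<Sum>d\<in>J. (\<Sum>m\<in>I. if P d m then u m * w d m else 0)^2)"
proof -
  have "(\<Sum>d\<in>J. (\<Sum>m\<in>I. if P d m then u m * w d m else 0)^2)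
      = (\<Sum>d\<in>J. \<Sum>m\<in>I. \<Sum>n\<in>I. (if P d m \<and> P d n then u m * u n * (w d m * w d n) else 0))"
    unfolding power2_eq_square sum_product by (intro sum.cong refl) (auto simp: mult_ac)
  also have "\<dots> = (\<Sum>m\<in>I. \<Sum>d\<in>J. \<Sum>n\<in>I. (if P d m \<and> P d n then u m * u n * (w d m * w d n) else 0))"
    by (rule sum.swap)
  also have "\<dots> = (\<Sum>m\<in>I. \<Sum>n\<in>I. \<Sum>d\<in>J. (if P d m \<and> P d n then u m * u n * (w d m * w d n) else 0))"
    by (intro sum.cong refl sum.swap)
  also have "\<dots> = (\<Sum>m\<in>I. \<Sum>n\<in>I. u m * u n * (\<Sum>d\<in>J. if P d m \<and> P d n then w d m * w d n else 0))"
    by (simp add: sum_distrib_left if_distrib cong: if_cong)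
  finally show ?thesis by simp
qed

lemma sum_dvd_reindex:
  fixes h :: "nat \<Rightarrow> real"
  assumes L: "L > 0"
  shows "(\<Sum>m\<in>{1..N}. if L dvd m then h m else 0) = (\<Sum>j\<in>{1..N div L}. h (L*j))"
proof -
  have "(\<Sum>m\<in>{1..N}. if L dvd m then h m else 0) = sum h {m\<in>{1..N}. L dvd m}"
    by (rule sum.inter_filter[symmetric]) simp
  also have "{m\<in>{1..N}. L dvd m} = (\<lambda>j. L*j) ` {1..N div L}"
  proof (intro equalityI subsetI)
    fix m assume "m \<in> {m\<in>{1..N}. L dvd m}"
    then obtain j where j: "m = L*j" "1 \<le> m" "m \<le> N" by auto
    hence "j \<ge> 1" by (cases j) auto
    moreover have "j \<le> N div L" using j L by (simp add: less_eq_div_iff_mult_less_eq mult.commute)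
    ultimately show "m \<in> (\<lambda>j. L*j) ` {1..N div L}" using j by auto
  next
    fix m assume "m \<in> (\<lambda>j. L*j) ` {1..N div L}"
    then obtain j where j: "m = L*j" "j \<in> {1..N div L}" by (rule imageE)
    hence j: "m = L*j" "1 \<le> j" "j \<le> N div L" by auto
    have "L*j \<le> N" using j L by (simp add: less_eq_div_iff_mult_less_eq mult.commute)
    moreover have "L*j \<ge> 1" using j L by simp
    ultimately show "m \<in> {m\<in>{1..N}. L dvd m}" using j by auto
  qed
  also have "sum h ((\<lambda>j. L*j) ` {1..N div L}) = (\<Sum>j\<in>{1..N div L}. h (L*j))"
    using L by (subst sum.reindex) (auto simp: inj_on_def)
  finally show ?thesis .
qed



lemma powr_div_split: "d > 0 \<Longrightarrow> e > 0 \<Longrightarrow> ((d::real)/e) powr t = d powr t * e powr (-t)"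
proof -
  assume "d > 0" "e > 0"
  have "(d/e) powr t = d powr t / e powr t" by (rule powr_divide)
  thus ?thesis by (simp add: powr_minus_divide)
qed

lemma P1:
  fixes m n g a :: real
  assumes "m > 0" "n > 0" "g > 0"
  shows "(m/g) powr (-a) * (n/g) powr (-a) = g powr (2*a) / (m*n) powr a"
  using assms by (simp add: powr_divide powr_minus powr_mult divide_simps powr_add[symmetric])

lemma P2:
  fixes m d1 d2 a :: real
  assumes "m > 0" "d1 > 0" "d2 > 0"
  shows "(m/d1) powr (-a) * (m/d2) powr (-a) = (d1*d2) powr a * m powr (-(2*a))"
  using assms by (simp add: powr_divide powr_minus powr_mult divide_simps powr_add[symmetric])

lemma P3:
  fixes e d d' a :: real
  assumes "e > 0" "d > 0" "d' > 0"
  shows "(e powr (1/2) * d powr (a-1)) * (e powr (1/2) * d' powr (a-1)) = e * (d*d') powr (a-1)"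
proof -
  have "e powr (1/2) * e powr (1/2) = e" using assms by (simp add: powr_add[symmetric])
  thus ?thesis using assms by (simp add: powr_mult mult_ac)
qed

lemma P4a:
  fixes e d y \<epsilon> :: real
  assumes "e > 0" "d > 0"
  shows "(y * e powr (-\<epsilon>) * (d/e) powr (-\<epsilon>/2)) * ((d/e) powr (-(1+\<epsilon>)/2))
       = y * (e powr (1/2) * d powr ((1/2 - \<epsilon>) - 1))"
proof -
  have ex: "-\<epsilon>/2 + -(1+\<epsilon>)/2 = -1/2-\<epsilon>" by (simp add: field_simps)
  have "(d/e) powr (-\<epsilon>/2) * (d/e) powr (-(1+\<epsilon>)/2) = (d/e) powr (-1/2-\<epsilon>)"
    by (subst powr_add[symmetric]) (simp only: ex)
  also have "\<dots> = d powr (-1/2-\<epsilon>) * e powr (-(-1/2-\<epsilon>))"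
    using assms(2,1) by (rule powr_div_split)
  also have "-(-1/2-\<epsilon>) = 1/2+\<epsilon>" by simp
  finally have 1: "(d/e) powr (-\<epsilon>/2) * (d/e) powr (-(1+\<epsilon>)/2) = d powr (-1/2-\<epsilon>) * e powr (1/2+\<epsilon>)" .
  have 2: "e powr (-\<epsilon>) * e powr (1/2+\<epsilon>) = e powr (1/2)" by (simp add: powr_add[symmetric])
  have "(y * e powr (-\<epsilon>) * (d/e) powr (-\<epsilon>/2)) * ((d/e) powr (-(1+\<epsilon>)/2))
      = y * e powr (-\<epsilon>) * ((d/e) powr (-\<epsilon>/2) * (d/e) powr (-(1+\<epsilon>)/2))" by (simp add: mult_ac)
  also have "\<dots> = y * (e powr (-\<epsilon>) * e powr (1/2+\<epsilon>)) * d powr (-1/2-\<epsilon>)" unfolding 1 by (simp add: mult_ac)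
  also have "\<dots> = y * (e powr (1/2) * d powr ((1/2 - \<epsilon>) - 1))" unfolding 2 by (simp add: mult_ac)
  finally show ?thesis .
qed

lemma P4b:
  fixes e d y \<epsilon> :: real
  assumes "e \<ge> 1" "d \<ge> e" "\<epsilon> > 0"
  shows "(y * e powr (-\<epsilon>) * (d/e) powr (-\<epsilon>/2))^2 \<le> y^2 * d powr (-\<epsilon>)"
proof -
  have e0: "e > 0" using assms by simp
  have h0: "(y * e powr (-\<epsilon>) * (d/e) powr (-\<epsilon>/2))^2 = y^2 * (e powr (-\<epsilon>) * e powr (-\<epsilon>)) * ((d/e) powr (-\<epsilon>/2) * (d/e) powr (-\<epsilon>/2))"
    by (simp add: power2_eq_square mult_ac)
  have h1: "(d/e) powr (-\<epsilon>/2) * (d/e) powr (-\<epsilon>/2) = (d/e) powr (-\<epsilon>)" by (simp add: powr_add[symmetric])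
  have h2: "(d/e) powr (-\<epsilon>) = d powr (-\<epsilon>) * e powr \<epsilon>"
    using assms e0 powr_div_split[of d e "-\<epsilon>"] by simp
  have h3: "e powr (-\<epsilon>) * e powr (-\<epsilon>) * (d powr (-\<epsilon>) * e powr \<epsilon>) = e powr (-\<epsilon>) * d powr (-\<epsilon>)"
    by (simp add: powr_add[symmetric] mult_ac)
  have eq: "(y * e powr (-\<epsilon>) * (d/e) powr (-\<epsilon>/2))^2 = y^2 * (e powr (-\<epsilon>) * d powr (-\<epsilon>))"
    unfolding h0 h1 h2 using h3 by (simp add: mult.assoc)
  have "e powr \<epsilon> \<ge> 1" using assms by (intro ge_one_powr_ge_zero) auto
  hence "e powr (-\<epsilon>) \<le> 1" by (auto simp: powr_minus_divide divide_le_eq_1)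
  hence "e powr (-\<epsilon>) * d powr (-\<epsilon>) \<le> d powr (-\<epsilon>)" by (simp add: mult_left_le_one_le)
  thus ?thesis unfolding eq by (intro mult_left_mono) auto
qed

lemma P4c:
  fixes e d \<epsilon> :: real
  shows "((d/e) powr (-(1+\<epsilon>)/2))^2 = (d/e) powr (-(1+\<epsilon>))"
  by (simp add: power2_eq_square powr_add[symmetric])


lemma Mx_bound:
  fixes \<alpha> :: real and d1 d2 N :: nat
  assumes \<alpha>: "0 < \<alpha>" "\<alpha> < 1/2" and d: "d1 > 0" "d2 > 0"
  shows "(\<Sum>m\<in>{1..N}. if d1 dvd m \<and> d2 dvd m then (real m / real d1) powr (-\<alpha>) * (real m / real d2) powr (-\<alpha>) else 0)
    \<le> real N powr (1-2*\<alpha>) / (1-2*\<alpha>) * (real (gcd d1 d2) * (real d1 * real d2) powr (\<alpha>-1))"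
proof -
  define L where "L = lcm d1 d2"
  define g where "g = gcd d1 d2"
  define c where "c = (real d1 * real d2) powr \<alpha>"
  have L0: "L > 0" using d by (simp add: L_def lcm_pos_nat)
  have g0: "g > 0" using d by (simp add: g_def)
  have Lg: "real d1 * real d2 = real g * real L"
    unfolding g_def L_def by (metis of_nat_mult prod_gcd_lcm_nat)
  have "(\<Sum>m\<in>{1..N}. if d1 dvd m \<and> d2 dvd m then (real m / real d1) powr (-\<alpha>) * (real m / real d2) powr (-\<alpha>) else 0)
      = (\<Sum>m\<in>{1..N}. if L dvd m then c * real m powr (-(2*\<alpha>)) else 0)"
    by (intro sum.cong refl) (use d in \<open>auto simp: L_def c_def P2\<close>)
  also have "\<dots> = (\<Sum>j\<in>{1..N div L}. c * real (L*j) powr (-(2*\<alpha>)))"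
    by (rule sum_dvd_reindex[OF L0])
  also have "\<dots> = c * real L powr (-(2*\<alpha>)) * (\<Sum>j\<in>{1..N div L}. real j powr (-(2*\<alpha>)))"
    by (simp add: sum_distrib_left powr_mult mult_ac)
  also have "\<dots> \<le> c * real L powr (-(2*\<alpha>)) * (real (N div L) powr (1-2*\<alpha>) / (1-2*\<alpha>))"
    using sum_powr_small[of "2*\<alpha>" "N div L"] \<alpha> by (intro mult_left_mono) (auto simp: c_def)
  also have "\<dots> \<le> c * real L powr (-(2*\<alpha>)) * ((real N / real L) powr (1-2*\<alpha>) / (1-2*\<alpha>))"
    using \<alpha> by (intro mult_left_mono divide_right_mono powr_mono2 of_nat_div_le_of_nat) (auto simp: c_def)
  also have "(real N / real L) powr (1-2*\<alpha>) = real N powr (1-2*\<alpha>) * real L powr (-(1-2*\<alpha>))"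
  proof (cases "N = 0")
    case False
    then show ?thesis using L0 by (intro powr_div_split) auto
  qed simp
  also have "c * real L powr (-(2*\<alpha>)) * (real N powr (1-2*\<alpha>) * real L powr (-(1-2*\<alpha>)) / (1-2*\<alpha>))
      = real N powr (1-2*\<alpha>) / (1-2*\<alpha>) * (c * (real L powr (-(2*\<alpha>)) * real L powr (-(1-2*\<alpha>))))"
    by (simp add: mult_ac)
  also have "real L powr (-(2*\<alpha>)) * real L powr (-(1-2*\<alpha>)) = 1 / real L"
  proof -
    have ex: "-(2*\<alpha>) + -(1-2*\<alpha>) = -1" by simp
    show ?thesis using L0 by (subst powr_add[symmetric]) (simp only: ex powr_minus_divide, simp)
  qed
  also have "c * (1 / real L) = real g * (real d1 * real d2) powr (\<alpha>-1)"
  proof -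
    have "(real d1 * real d2) powr (\<alpha>-1) = c / (real d1 * real d2)"
      using d by (simp add: c_def powr_diff)
    thus ?thesis using Lg g0 L0 d by (simp add: field_simps)
  qed
  finally show ?thesis by (simp add: g_def)
qed



theorem theorem2:
  fixes \<alpha> :: real
  assumes "0 < \<alpha>" and "\<alpha> < 1/2"
  shows "\<exists>C::real. \<forall>N::nat. N \<ge> 1 \<longrightarrow>
           (\<forall>a :: nat \<Rightarrow> complex. (\<Sum>n=1..N. (cmod (a n))\<^sup>2) = 1 \<longrightarrow>
              Re (\<Sum>m=1..N. \<Sum>n=1..N.
                    a m * cnj (a n) * complex_of_real (real (gcd m n) powr (2*\<alpha>) / real (m*n) powr \<alpha>))
              \<le> C * real N powr (1 - 2*\<alpha>))"
proof -
  note \<alpha> = assms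
  define \<epsilon> where "\<epsilon> = 1/2 - \<alpha>"
  have \<epsilon>0: "\<epsilon> > 0" using \<alpha> by (simp add: \<epsilon>_def)
  obtain Ct where Ct: "Ct > 0" "\<And>m. m > 0 \<Longrightarrow> real (card {d. d dvd m}) \<le> Ct * real m powr \<epsilon>"
    using tau_bound[OF \<epsilon>0] by blast
  define Z where "Z = (1+\<epsilon>)/\<epsilon>"
  have Z0: "Z > 0" using \<epsilon>0 by (simp add: Z_def)
  define C where "C = Z * Ct / (1 - 2*\<alpha>)"
  show ?thesis
  proof (intro exI[of _ C] allI impI)
    fix N :: nat and a :: "nat \<Rightarrow> complex"
    assume N: "N \<ge> 1" and a: "(\<Sum>n=1..N. (cmod (a n))\<^sup>2) = 1"
    define I where "I = {1..N}"
    have finI: "finite I" by (simp add: I_def)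
    define x where "x m = cmod (a m)" for m
    have x0: "x m \<ge> 0" for m by (simp add: x_def)
    define f where "f d m = (real m / real d) powr (-\<alpha>)" for d m :: nat
    define y where "y d = (\<Sum>m\<in>I. if d dvd m then x m * f d m else 0)" for d
    have y0: "y d \<ge> 0" for d unfolding y_def using x0 by (intro sum_nonneg) (auto simp: f_def)
    define z where "z m = (\<Sum>d\<in>I. if d dvd m then y d * f d m else 0)" for m
    define K where "K m n = real (gcd m n) powr (2*\<alpha>) / real (m*n) powr \<alpha>" for m n :: nat
    have K0: "K m n \<ge> 0" for m n by (simp add: K_def)
    define Y where "Y = (\<Sum>d\<in>I. (y d)^2)"
    define D where "D = C * real N powr (1 - 2*\<alpha>)"
    define w where "w e d = real e powr (1/2) * real d powr (\<alpha>-1)" for e d :: nat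
    have A: "Re (\<Sum>m=1..N. \<Sum>n=1..N. a m * cnj (a n) * complex_of_real (K m n))
        \<le> (\<Sum>m\<in>I. \<Sum>n\<in>I. x m * x n * K m n)"
    proof -
      have "Re (\<Sum>m=1..N. \<Sum>n=1..N. a m * cnj (a n) * complex_of_real (K m n))
          \<le> cmod (\<Sum>m=1..N. \<Sum>n=1..N. a m * cnj (a n) * complex_of_real (K m n))"
        by (rule complex_Re_le_cmod)
      also have "\<dots> \<le> (\<Sum>m=1..N. cmod (\<Sum>n=1..N. a m * cnj (a n) * complex_of_real (K m n)))"
        by (rule norm_sum)
      also have "\<dots> \<le> (\<Sum>m=1..N. \<Sum>n=1..N. cmod (a m * cnj (a n) * complex_of_real (K m n)))"
        by (intro sum_mono norm_sum)
      also have "\<dots> = (\<Sum>m\<in>I. \<Sum>n\<in>I. x m * x n * K m n)"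
        unfolding I_def x_def using K0 by (simp add: norm_mult)
      finally show ?thesis .
    qed
    have B: "(\<Sum>m\<in>I. \<Sum>n\<in>I. x m * x n * K m n) \<le> Y"
    proof -
      have "(\<Sum>m\<in>I. \<Sum>n\<in>I. x m * x n * K m n)
          \<le> (\<Sum>m\<in>I. \<Sum>n\<in>I. x m * x n * (\<Sum>d\<in>I. if d dvd m \<and> d dvd n then f d m * f d n else 0))"
      proof (intro sum_mono mult_left_mono)
        fix m n assume mn: "m \<in> I" "n \<in> I"
        define g where "g = gcd m n"
        have m0: "m > 0" and n0: "n > 0" using mn by (auto simp: I_def)
        have gI: "g \<in> I" using mn m0 by (auto simp: I_def g_def Suc_le_eq intro: order_trans[OF gcd_le1_nat])
        have g0: "g > 0" using m0 by (simp add: g_def)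
        have "K m n = (if g dvd m \<and> g dvd n then f g m * f g n else 0)"
          using P1[of "real m" "real n" "real g" \<alpha>] m0 n0 g0 by (simp add: K_def f_def g_def)
        also have "\<dots> \<le> (\<Sum>d\<in>I. if d dvd m \<and> d dvd n then f d m * f d n else 0)"
          by (rule member_le_sum[OF gI _ finI]) (auto simp: f_def)
        finally show "K m n \<le> (\<Sum>d\<in>I. if d dvd m \<and> d dvd n then f d m * f d n else 0)" .
      qed (use x0 in auto)
      also have "\<dots> = Y"
        unfolding Y_def y_def by (rule quad_expand)
      finally show ?thesis .
    qed
    have C1: "Y = (\<Sum>m\<in>I. x m * z m)"
    proof -
      have "Y = (\<Sum>d\<in>I. y d * (\<Sum>m\<in>I. if d dvd m then x m * f d m else 0))"
        unfolding Y_def power2_eq_square y_def[symmetric] by simp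
      also have "\<dots> = (\<Sum>d\<in>I. \<Sum>m\<in>I. x m * (if d dvd m then y d * f d m else 0))"
        by (simp add: sum_distrib_left mult_ac if_distrib cong: if_cong)
      also have "\<dots> = (\<Sum>m\<in>I. \<Sum>d\<in>I. x m * (if d dvd m then y d * f d m else 0))"
        by (rule sum.swap)
      also have "\<dots> = (\<Sum>m\<in>I. x m * z m)"
        by (simp add: z_def sum_distrib_left)
      finally show ?thesis .
    qed
    have sx: "(\<Sum>m\<in>I. (x m)^2) = 1" using a by (simp add: I_def x_def)
    have C2: "Y^2 \<le> (\<Sum>m\<in>I. (z m)^2)"
      using Cauchy_Schwarz_ineq_sum[of x z I] unfolding C1[symmetric] sx by simp
    have D1: "(\<Sum>m\<in>I. (z m)^2)
        = (\<Sum>d1\<in>I. \<Sum>d2\<in>I. y d1 * y d2 * (\<Sum>m\<in>I. if d1 dvd m \<and> d2 dvd m then f d1 m * f d2 m else 0))"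
      unfolding z_def
      using quad_expand[where P="\<lambda>m d. d dvd m" and w="\<lambda>m d. f d m" and u=y and I=I and J=I]
      by simp
    have E: "(\<Sum>m\<in>I. (z m)^2) \<le> (\<Sum>d1\<in>I. \<Sum>d2\<in>I. y d1 * y d2 *
         (real N powr (1-2*\<alpha>) / (1-2*\<alpha>) * (real (gcd d1 d2) * (real d1 * real d2) powr (\<alpha>-1))))"
      unfolding D1
    proof (intro sum_mono mult_left_mono)
      fix d1 d2 assume "d1 \<in> I" "d2 \<in> I"
      hence "d1 > 0" "d2 > 0" by (auto simp: I_def)
      thus "(\<Sum>m\<in>I. if d1 dvd m \<and> d2 dvd m then f d1 m * f d2 m else 0)
          \<le> real N powr (1-2*\<alpha>) / (1-2*\<alpha>) * (real (gcd d1 d2) * (real d1 * real d2) powr (\<alpha>-1))"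
        unfolding I_def f_def by (rule Mx_bound[OF \<alpha>])
    qed (use y0 in auto)
    define cN where "cN = real N powr (1-2*\<alpha>) / (1-2*\<alpha>)"
    have cN0: "cN \<ge> 0" using \<alpha> by (simp add: cN_def)
    have F: "(\<Sum>d1\<in>I. \<Sum>d2\<in>I. y d1 * y d2 * (cN * (real (gcd d1 d2) * (real d1 * real d2) powr (\<alpha>-1))))
        \<le> cN * (\<Sum>e\<in>I. (\<Sum>d\<in>I. if e dvd d then y d * w e d else 0)^2)"
    proof -
      have "(\<Sum>d1\<in>I. \<Sum>d2\<in>I. y d1 * y d2 * (cN * (real (gcd d1 d2) * (real d1 * real d2) powr (\<alpha>-1))))
          = cN * (\<Sum>d1\<in>I. \<Sum>d2\<in>I. y d1 * y d2 * (real (gcd d1 d2) * (real d1 * real d2) powr (\<alpha>-1)))"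
        by (simp add: sum_distrib_left mult_ac)
      also have "\<dots> \<le> cN * (\<Sum>d1\<in>I. \<Sum>d2\<in>I. y d1 * y d2 * (\<Sum>e\<in>I. if e dvd d1 \<and> e dvd d2 then w e d1 * w e d2 else 0))"
      proof (intro mult_left_mono[OF _ cN0] sum_mono mult_left_mono)
        fix d1 d2 assume dd: "d1 \<in> I" "d2 \<in> I"
        define g where "g = gcd d1 d2"
        have d0: "d1 > 0" "d2 > 0" using dd by (auto simp: I_def)
        have gI: "g \<in> I" using dd d0 by (auto simp: I_def g_def Suc_le_eq intro: order_trans[OF gcd_le1_nat])
        have g0: "g > 0" using d0 by (simp add: g_def)
        have "real g * (real d1 * real d2) powr (\<alpha>-1) = (if g dvd d1 \<and> g dvd d2 then w g d1 * w g d2 else 0)"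
          using P3[of "real g" "real d1" "real d2" \<alpha>] d0 g0 by (simp add: w_def g_def)
        also have "\<dots> \<le> (\<Sum>e\<in>I. if e dvd d1 \<and> e dvd d2 then w e d1 * w e d2 else 0)"
          by (rule member_le_sum[OF gI _ finI]) (auto simp: w_def)
        finally show "real (gcd d1 d2) * (real d1 * real d2) powr (\<alpha>-1)
            \<le> (\<Sum>e\<in>I. if e dvd d1 \<and> e dvd d2 then w e d1 * w e d2 else 0)" by (simp add: g_def)
      qed (use y0 in auto)
      also have "\<dots> = cN * (\<Sum>e\<in>I. (\<Sum>d\<in>I. if e dvd d then y d * w e d else 0)^2)"
        by (subst quad_expand) (rule refl)
      finally show ?thesis .
    qed
    have G: "(\<Sum>d\<in>I. if e dvd d then y d * w e d else 0)^2
        \<le> Z * (\<Sum>d\<in>I. if e dvd d then (y d)^2 * real d powr (-\<epsilon>) else 0)" if eI: "e \<in> I" for e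
    proof -
      have e1: "e \<ge> 1" using eI by (simp add: I_def)
      define aa where "aa d = (if e dvd d then y d * real e powr (-\<epsilon>) * (real d / real e) powr (-\<epsilon>/2) else 0)" for d
      define bb where "bb d = (if e dvd d then (real d / real e) powr (-(1+\<epsilon>)/2) else 0)" for d
      have ab: "(\<Sum>d\<in>I. if e dvd d then y d * w e d else 0) = (\<Sum>d\<in>I. aa d * bb d)"
      proof (intro sum.cong refl)
        fix d assume "d \<in> I"
        hence "d > 0" by (simp add: I_def)
        hence pa: "(y d * real e powr (-\<epsilon>) * (real d / real e) powr (-\<epsilon>/2)) * ((real d / real e) powr (-(1+\<epsilon>)/2))
           = y d * (real e powr (1/2) * real d powr ((1/2 - \<epsilon>) - 1))"
          using e1 by (intro P4a) auto
        have ex: "(1/2 - \<epsilon>) - 1 = \<alpha> - 1" by (simp add: \<epsilon>_def)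
        show "(if e dvd d then y d * w e d else 0) = aa d * bb d"
          using pa unfolding ex aa_def bb_def w_def by (simp only: if_distrib mult_zero_left mult_zero_right split: if_split) (auto simp: mult_ac)
      qed
      have sa: "(\<Sum>d\<in>I. (aa d)^2) \<le> (\<Sum>d\<in>I. if e dvd d then (y d)^2 * real d powr (-\<epsilon>) else 0)"
      proof (intro sum_mono)
        fix d assume "d \<in> I"
        hence d0: "d > 0" by (simp add: I_def)
        show "(aa d)^2 \<le> (if e dvd d then (y d)^2 * real d powr (-\<epsilon>) else 0)"
        proof (cases "e dvd d")
          case True
          hence "e \<le> d" using d0 by (simp add: dvd_imp_le)
          thus ?thesis using True P4b[of "real e" "real d" \<epsilon> "y d"] e1 \<epsilon>0 by (simp add: aa_def)
        qed (simp add: aa_def)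
      qed
      have sb: "(\<Sum>d\<in>I. (bb d)^2) \<le> Z"
      proof -
        have "(\<Sum>d\<in>I. (bb d)^2) = (\<Sum>d\<in>{1..N}. if e dvd d then (real d / real e) powr (-(1+\<epsilon>)) else 0)"
          unfolding I_def
        proof (intro sum.cong refl)
          fix d
          show "(bb d)^2 = (if e dvd d then (real d / real e) powr (-(1+\<epsilon>)) else 0)"
          proof (cases "e dvd d")
            case True
            then show ?thesis unfolding bb_def by (simp only: if_P[OF True] if_True P4c)
          qed (simp add: bb_def)
        qed
        also have "\<dots> = (\<Sum>j\<in>{1..N div e}. (real (e*j) / real e) powr (-(1+\<epsilon>)))"
          using e1 by (intro sum_dvd_reindex) auto
        also have "\<dots> = (\<Sum>j\<in>{1..N div e}. real j powr (-(1+\<epsilon>)))"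
          using e1 by (intro sum.cong refl) simp
        also have "\<dots> \<le> Z" unfolding Z_def using sum_powr_big[of "1+\<epsilon>" "N div e"] \<epsilon>0 by simp
        finally show ?thesis .
      qed
      have "(\<Sum>d\<in>I. aa d * bb d)^2 \<le> (\<Sum>d\<in>I. (aa d)^2) * (\<Sum>d\<in>I. (bb d)^2)"
        by (rule Cauchy_Schwarz_ineq_sum)
      also have "\<dots> \<le> (\<Sum>d\<in>I. if e dvd d then (y d)^2 * real d powr (-\<epsilon>) else 0) * Z"
        using sa sb by (intro mult_mono) (auto intro: sum_nonneg)
      finally show ?thesis unfolding ab by (simp add: mult.commute)
    qed
    have H: "(\<Sum>e\<in>I. \<Sum>d\<in>I. if e dvd d then (y d)^2 * real d powr (-\<epsilon>) else 0) \<le> Ct * Y"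
    proof -
      have "(\<Sum>e\<in>I. \<Sum>d\<in>I. if e dvd d then (y d)^2 * real d powr (-\<epsilon>) else 0)
          = (\<Sum>d\<in>I. \<Sum>e\<in>I. if e dvd d then (y d)^2 * real d powr (-\<epsilon>) else 0)"
        by (rule sum.swap)
      also have "\<dots> = (\<Sum>d\<in>I. (y d)^2 * real d powr (-\<epsilon>) * real (card (I \<inter> {e. e dvd d})))"
        using finI by (simp add: sum.If_cases mult_ac)
      also have "\<dots> \<le> (\<Sum>d\<in>I. (y d)^2 * Ct)"
      proof (intro sum_mono)
        fix d assume "d \<in> I"
        hence d0: "d > 0" by (simp add: I_def)
        have "card (I \<inter> {e. e dvd d}) \<le> card {e. e dvd d}"
          using d0 by (intro card_mono) (auto simp: finite_divisors_nat)
        hence "real (card (I \<inter> {e. e dvd d})) \<le> Ct * real d powr \<epsilon>"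
          using Ct(2)[OF d0] by linarith
        hence "real d powr (-\<epsilon>) * real (card (I \<inter> {e. e dvd d})) \<le> real d powr (-\<epsilon>) * (Ct * real d powr \<epsilon>)"
          by (intro mult_left_mono) auto
        also have "\<dots> = Ct" using d0 by (simp add: powr_minus field_simps)
        finally have "real d powr (-\<epsilon>) * real (card (I \<inter> {e. e dvd d})) \<le> Ct" .
        thus "(y d)^2 * real d powr (-\<epsilon>) * real (card (I \<inter> {e. e dvd d})) \<le> (y d)^2 * Ct"
          by (simp add: mult.assoc mult_left_mono)
      qed
      also have "\<dots> = Ct * Y" by (simp add: Y_def sum_distrib_left mult.commute)
      finally show ?thesis .
    qed
    have "(\<Sum>m\<in>I. (z m)^2) \<le> cN * (\<Sum>e\<in>I. (\<Sum>d\<in>I. if e dvd d then y d * w e d else 0)^2)"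
      using E F by (simp add: cN_def)
    also have "\<dots> \<le> cN * (\<Sum>e\<in>I. Z * (\<Sum>d\<in>I. if e dvd d then (y d)^2 * real d powr (-\<epsilon>) else 0))"
      using G cN0 by (intro mult_left_mono sum_mono) auto
    also have "\<dots> = cN * Z * (\<Sum>e\<in>I. \<Sum>d\<in>I. if e dvd d then (y d)^2 * real d powr (-\<epsilon>) else 0)"
      by (simp add: sum_distrib_left mult_ac)
    also have "\<dots> \<le> cN * Z * (Ct * Y)"
      using H cN0 Z0 by (intro mult_left_mono) auto
    also have "cN * Z * (Ct * Y) = D * Y"
      by (simp add: cN_def D_def C_def field_simps)
    finally have ZD: "(\<Sum>m\<in>I. (z m)^2) \<le> D * Y" .
    have Y0: "Y \<ge> 0" unfolding Y_def by (intro sum_nonneg) auto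
    have YD: "Y \<le> D"
    proof (cases "Y = 0")
      case True
      have "D \<ge> 0" using Z0 Ct(1) \<alpha> by (simp add: D_def C_def)
      thus ?thesis using True by simp
    next
      case False
      hence "Y > 0" using Y0 by simp
      moreover have "Y * Y \<le> D * Y" using C2 ZD by (simp add: power2_eq_square)
      ultimately show ?thesis by simp
    qed
    show "Re (\<Sum>m=1..N. \<Sum>n=1..N.
                    a m * cnj (a n) * complex_of_real (real (gcd m n) powr (2*\<alpha>) / real (m*n) powr \<alpha>))
              \<le> C * real N powr (1 - 2*\<alpha>)"
      using A B YD unfolding K_def D_def by linarith
  qed
qed

end
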